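(* Let $p(\cdot):\mathbb{R}^n\to(0,\infty)$ be measurable with $0<p_-\le p_+<\infty$. If $\omega\in\mathcal{W}_{p(\cdot)}$, then there is a constant $C\ge1$ such that for every cube $Q\subset\mathbb{R}^n$, \[ \|\chi_Q\|_{L^{p(\cdot)}_\omega}\le\|\chi_{2Q}\|_{L^{p(\cdot)}_\omega}\le C\|\chi_Q\|_{L^{p(\cdot)}_\omega}. \]
   Context: $2Q$ denotes the cube with the same center as $Q$ and twice its side length. For measurable $p(\cdot)$, $p_-=\operatorname{ess\,inf} p$, $p_+=\operatorname{ess\,sup} p$. A weight is a locally integrable $\omega$ with $0<\omega<\infty$ a.e. $\|f\|_{L^{p(\cdot)}_\omega}:=\|f\omega\|_{L^{p(\cdot)}}$, where $\|g\|_{L^{p(\cdot)}}=\inf\{\lambda>0:\int|g(x)/\lambda|^{p(x)}dx\le1\}$; $t'(\cdot)$ denotes the conjugate exponent of $t(\cdot)\ge1$; $M$ is the Hardy–Littlewood maximal operator. $\mathcal{W}_{p(\cdot)}$ is the set of weights $\omega$ such that: (i) there exists $0<p_\ast<\min\{1,p_-\}$ with $\|\chi_Q\|_{L^{p(\cdot)/p_\ast}_{\omega^{p_\ast}}}<\infty$ and $\|\chi_Q\|_{L^{(p(\cdot)/p_\ast)'}_{\omega^{-p_\ast}}}<\infty$ for all cubes $Q$; (ii) there exist $\kappa>1$, $s>1$ such that $M$ is bounded on $L^{(sp(\cdot))'/\kappa}_{\omega^{-\kappa/s}}$. *)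

theory Defs
  imports "HOL-Analysis.Analysis" "HOL-Probability.Essential_Supremum"
begin

text \<open>Closed axis-parallel cube with centre c and half side length r (side length 2r).
  For a cube Q = cube c r, the cube 2Q is cube c (2 r).\<close>
definition cube :: "real^'n \<Rightarrow> real \<Rightarrow> (real^'n) set" where
  "cube c r = {x. \<forall>i. \<bar>x$i - c$i\<bar> \<le> r}"

definition cubes :: "(real^'n) set set" where
  "cubes = {cube c r | c r. r > 0}"

definition p_plus :: "(real^'n \<Rightarrow> real) \<Rightarrow> ereal" where
  "p_plus p = esssup lebesgue (\<lambda>x. ereal (p x))"

definition p_minus :: "(real^'n \<Rightarrow> real) \<Rightarrow> ereal" where
  "p_minus p = - esssup lebesgue (\<lambda>x. - ereal (p x))"

definition epow :: "ennreal \<Rightarrow> real \<Rightarrow> ennreal" where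
  "epow a r = (if a = \<infinity> then \<infinity> else ennreal (enn2real a powr r))"

text \<open>Modular of the variable Lebesgue space with exponent q(.) in (0,\<infinity>]:
  integral of |g/\<lambda>|^q over {q < \<infinity>} plus the essential sup of |g/\<lambda>| over {q = \<infinity>}.\<close>
definition modular :: "(real^'n \<Rightarrow> ereal) \<Rightarrow> (real^'n \<Rightarrow> ennreal) \<Rightarrow> real \<Rightarrow> ennreal" where
  "modular q g lam =
     (\<integral>\<^sup>+ x. (if q x = \<infinity> then 0 else epow (g x / ennreal lam) (real_of_ereal (q x))) \<partial>lebesgue)
     + Inf {c. AE x in lebesgue. q x = \<infinity> \<longrightarrow> g x / ennreal lam \<le> c}"

text \<open>Luxemburg (quasi-)norm; the infimum of the empty set is \<infinity>.\<close>
definition vnorm :: "(real^'n \<Rightarrow> ereal) \<Rightarrow> (real^'n \<Rightarrow> ennreal) \<Rightarrow> ennreal" where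
  "vnorm q g = Inf {ennreal lam | lam. lam > 0 \<and> modular q g lam \<le> 1}"

definition wnorm :: "(real^'n \<Rightarrow> ereal) \<Rightarrow> (real^'n \<Rightarrow> real) \<Rightarrow> (real^'n \<Rightarrow> real) \<Rightarrow> ennreal" where
  "wnorm q w f = vnorm q (\<lambda>x. ennreal \<bar>f x * w x\<bar>)"

text \<open>Conjugate exponent t' = t/(t-1) (with 1' = \<infinity>), meaningful for t \<ge> 1.\<close>
definition conj_exp :: "(real^'n \<Rightarrow> real) \<Rightarrow> real^'n \<Rightarrow> ereal" where
  "conj_exp t x = (if t x = 1 then \<infinity> else ereal (t x / (t x - 1)))"

definition maximal :: "(real^'n \<Rightarrow> real) \<Rightarrow> real^'n \<Rightarrow> ennreal" where
  "maximal f x = (SUP Q \<in> {Q \<in> cubes. x \<in> Q}.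
      (\<integral>\<^sup>+ y \<in> Q. ennreal \<bar>f y\<bar> \<partial>lebesgue) / emeasure lebesgue Q)"

definition is_weight :: "(real^'n \<Rightarrow> real) \<Rightarrow> bool" where
  "is_weight w \<longleftrightarrow> w \<in> borel_measurable lebesgue \<and>
     (\<forall>K. compact K \<longrightarrow> set_integrable lebesgue K w) \<and> (AE x in lebesgue. 0 < w x)"

definition W_class :: "(real^'n \<Rightarrow> real) \<Rightarrow> (real^'n \<Rightarrow> real) set" where
  "W_class p = {w. is_weight w \<and>
     (\<exists>ps::real. 0 < ps \<and> ps < 1 \<and> ereal ps < p_minus p \<and>
        (\<forall>Q\<in>cubes.
           wnorm (\<lambda>x. ereal (p x / ps)) (\<lambda>x. w x powr ps) (indicator Q) < \<infinity> \<and>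
           wnorm (conj_exp (\<lambda>x. p x / ps)) (\<lambda>x. w x powr (- ps)) (indicator Q) < \<infinity>)) \<and>
     (\<exists>\<kappa>>1. \<exists>s>1. (AE x in lebesgue. 1 \<le> s * p x) \<and>
        (\<exists>C::real. \<forall>f \<in> borel_measurable lebesgue.
           wnorm (\<lambda>x. conj_exp (\<lambda>y. s * p y) x / ereal \<kappa>) (\<lambda>x. w x powr (- \<kappa> / s)) f < \<infinity> \<longrightarrow>
           vnorm (\<lambda>x. conj_exp (\<lambda>y. s * p y) x / ereal \<kappa>)
                 (\<lambda>x. maximal f x * ennreal \<bar>w x powr (- \<kappa> / s)\<bar>)
           \<le> ennreal C * wnorm (\<lambda>x. conj_exp (\<lambda>y. s * p y) x / ereal \<kappa>) (\<lambda>x. w x powr (- \<kappa> / s)) f))}"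

end

theory Submission
  imports Defs
begin

lemma cube_cbox: "cube c r = cbox (c - vec r) (c + vec r)"
  unfolding cube_def by (auto simp: mem_box_cart abs_le_iff algebra_simps)

lemma cube_sets: "cube c r \<in> sets lebesgue"
  unfolding cube_cbox by (intro fmeasurableD lmeasurable_cbox)

lemma cube_meas:
  fixes c :: "real^'n"
  assumes "r > 0"
  shows "emeasure lebesgue (cube c r) = ennreal ((2*r) ^ CARD('n))"
proof -
  have "c \<in> cbox (c - vec r) (c + vec r)" using assms by (simp add: mem_box_cart)
  then have ne: "cbox (c - vec r) (c + vec r) \<noteq> {}" by blast
  have "emeasure lebesgue (cube c r) = emeasure lborel (cube c r)"
    unfolding cube_cbox by (simp add: emeasure_completion)
  also have "... = ennreal (measure lborel (cbox (c - vec r) (c + vec r)))"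
    unfolding cube_cbox using emeasure_lborel_cbox_finite
    by (intro emeasure_eq_ennreal_measure) (simp add: top.not_eq_extremum)
  also have "... = ennreal ((2*r) ^ CARD('n))"
    using content_cbox_cart[OF ne] by simp
  finally show ?thesis .
qed

lemma modular_real:
  fixes G :: "real^'n \<Rightarrow> real"
  assumes "lam > 0" "\<And>x. 0 \<le> G x"
  shows "modular q (\<lambda>x. ennreal (G x)) lam =
    (\<integral>\<^sup>+x. (if q x = \<infinity> then 0 else ennreal ((G x / lam) powr real_of_ereal (q x))) \<partial>lebesgue)
    + Inf {c. AE x in lebesgue. q x = \<infinity> \<longrightarrow> ennreal (G x / lam) \<le> c}"
proof -
  have e: "\<And>x. ennreal (G x) / ennreal lam = ennreal (G x / lam)" using assms by (simp add: divide_ennreal)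
  have e2: "\<And>x r. epow (ennreal (G x / lam)) r = ennreal ((G x / lam) powr r)"
    using assms by (simp add: epow_def)
  show ?thesis unfolding modular_def e e2 ..
qed

lemma modular_fin:
  fixes G :: "real^'n \<Rightarrow> real"
  assumes "lam > 0" "\<And>x. 0 \<le> G x"
  shows "modular (\<lambda>x. ereal (p x)) (\<lambda>x. ennreal (G x)) lam =
    (\<integral>\<^sup>+x. ennreal ((G x / lam) powr p x) \<partial>lebesgue)"
  using assms by (simp add: modular_real bot_ennreal)

lemma vnorm_le: "lam > 0 \<Longrightarrow> modular q g lam \<le> 1 \<Longrightarrow> vnorm q g \<le> ennreal lam"
  unfolding vnorm_def by (rule Inf_lower) blast

lemma vnorm_less:
  assumes "vnorm q g < ennreal t"
  obtains lam where "lam > 0" "modular q g lam \<le> 1" "lam < t"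
proof -
  from assms obtain y where "y \<in> {ennreal lam | lam. lam > 0 \<and> modular q g lam \<le> 1}" "y < ennreal t"
    unfolding vnorm_def Inf_less_iff by blast
  then obtain lam where "lam > 0" "modular q g lam \<le> 1" "ennreal lam < ennreal t" by blast
  then show ?thesis using that by (simp add: ennreal_less_iff)
qed

lemma vnorm_ge: "(\<And>lam. lam > 0 \<Longrightarrow> modular q g lam \<le> 1 \<Longrightarrow> t \<le> ennreal lam) \<Longrightarrow> t \<le> vnorm q g"
  unfolding vnorm_def by (rule Inf_greatest) blast

lemma vnorm_mono:
  assumes "\<And>lam. lam > 0 \<Longrightarrow> modular q g lam \<le> modular q h lam"
  shows "vnorm q g \<le> vnorm q h"
proof (rule vnorm_ge)
  fix lam :: real assume "lam > 0" "modular q h lam \<le> 1"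
  then show "vnorm q g \<le> ennreal lam" using assms by (intro vnorm_le) (auto intro: order_trans)
qed

lemma epow_mono: "a \<le> b \<Longrightarrow> 0 \<le> r \<Longrightarrow> epow a r \<le> epow b r"
  unfolding epow_def
  by (auto intro!: ennreal_leI powr_mono2 enn2real_mono simp: top.not_eq_extremum)

lemma modular_mono:
  assumes "AE x in lebesgue. 0 \<le> q x"
    and "AE x in lebesgue. g x / ennreal lam1 \<le> h x / ennreal lam2"
  shows "modular q g lam1 \<le> modular q h lam2"
  unfolding modular_def
proof (rule add_mono)
  show "(\<integral>\<^sup>+ x. (if q x = \<infinity> then 0 else epow (g x / ennreal lam1) (real_of_ereal (q x))) \<partial>lebesgue)
    \<le> (\<integral>\<^sup>+ x. (if q x = \<infinity> then 0 else epow (h x / ennreal lam2) (real_of_ereal (q x))) \<partial>lebesgue)"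
  proof (intro nn_integral_mono_AE)
    have "AE x in lebesgue. 0 \<le> q x \<and> g x / ennreal lam1 \<le> h x / ennreal lam2"
      using assms(1,2) by (simp add: eventually_conj_iff)
    then show "AE x in lebesgue. (if q x = \<infinity> then 0 else epow (g x / ennreal lam1) (real_of_ereal (q x)))
      \<le> (if q x = \<infinity> then 0 else epow (h x / ennreal lam2) (real_of_ereal (q x)))"
      by (rule eventually_mono) (auto intro!: epow_mono real_of_ereal_pos)
  qed
  show "Inf {c. AE x in lebesgue. q x = \<infinity> \<longrightarrow> g x / ennreal lam1 \<le> c}
    \<le> Inf {c. AE x in lebesgue. q x = \<infinity> \<longrightarrow> h x / ennreal lam2 \<le> c}"
  proof (rule Inf_superset_mono, rule subsetI)
    fix c assume "c \<in> {c. AE x in lebesgue. q x = \<infinity> \<longrightarrow> h x / ennreal lam2 \<le> c}"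
    then have "AE x in lebesgue. q x = \<infinity> \<longrightarrow> h x / ennreal lam2 \<le> c" by simp
    with assms(2) have "AE x in lebesgue. q x = \<infinity> \<longrightarrow> g x / ennreal lam1 \<le> c"
      by eventually_elim (auto intro: order_trans)
    then show "c \<in> {c. AE x in lebesgue. q x = \<infinity> \<longrightarrow> g x / ennreal lam1 \<le> c}" by simp
  qed
qed

lemma young_simple:
  fixes x y r :: real
  assumes "x \<ge> 0" "y \<ge> 0" "r > 1"
  shows "x * y \<le> x powr r + y powr (r/(r-1))"
proof -
  have "x * y \<le> x powr r / r + y powr (r/(r-1)) / (r/(r-1))"
    using assms by (intro Youngs_inequality) (auto simp: field_simps)
  also have "... \<le> x powr r + y powr (r/(r-1))"
  proof (intro add_mono)
    have dl: "\<And>a c::real. a \<ge> 0 \<Longrightarrow> c \<ge> 1 \<Longrightarrow> a / c \<le> a"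
      by (simp add: divide_le_eq mult_le_cancel_left1)
    have "r/(r-1) \<ge> 1" using assms by (simp add: field_simps)
    then show "y powr (r / (r - 1)) / (r / (r - 1)) \<le> y powr (r / (r - 1))"
      by (intro dl) auto
    show "x powr r / r \<le> x powr r" using assms by (intro dl) auto
  qed
  finally show ?thesis .
qed

lemma pointwise_jensen:
  fixes F t k :: real
  assumes "F \<ge> 0" "t > 0" "k > 1"
  shows "F \<le> t + t powr (1-k) * F powr k"
proof (cases "F \<le> t")
  case True then show ?thesis using assms by (simp add: add_increasing2)
next
  case False
  then have "F = F powr k * F powr (1-k)" using assms by (simp add: powr_add[symmetric])
  also have "... \<le> F powr k * t powr (1-k)"
    using False assms by (intro mult_left_mono powr_mono2') auto
  finally show ?thesis using assms by (simp add: mult.commute add_increasing)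
qed

lemma jensen_fin:
  fixes t m k I :: real
  assumes "t > 0" "m > 0" "k > 1" "I \<ge> 0" "2*t*m \<le> t*m + t powr (1-k) * I"
  shows "t powr k * m \<le> I"
proof -
  have "t*m \<le> t powr (1-k) * I" using assms(5) by linarith
  then have "t powr (k-1) * (t*m) \<le> t powr (k-1) * (t powr (1-k) * I)"
    by (intro mult_left_mono) auto
  moreover have "t powr (k-1) * (t*m) = t powr k * m"
  proof -
    have "t powr (k-1) * t = t powr (k-1) * t powr 1" using assms by simp
    also have "... = t powr k" by (simp only: powr_add[symmetric]) simp
    finally show ?thesis by (simp add: mult.assoc[symmetric])
  qed
  moreover have "t powr (k-1) * (t powr (1-k) * I) = I"
    using assms by (simp add: powr_add[symmetric] mult.assoc[symmetric])
  ultimately show ?thesis by simp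
qed

lemma powr_ps:
  fixes w lam p ps :: real
  assumes "w > 0" "lam > 0" "ps > 0"
  shows "(w powr ps / lam) powr (p/ps) = (w / lam powr (1/ps)) powr p"
  using assms by (simp add: powr_divide powr_powr)

lemma keyX:
  fixes w m p s k :: real
  assumes "w>0" "m>0" "s>0" "k>0" "s*p>1"
  shows "((((w/m) powr p) powr k * w powr (-k/s)) / (2 powr k * m powr (-k/s))) powr ((s*p/(s*p-1))/k)
         \<le> 1/2 * (w/m) powr p"
proof -
  define X where "X = (((w/m) powr p) powr k * w powr (-k/s)) / (2 powr k * m powr (-k/s))"
  define L where "L = ln w - ln m"
  have Xpos: "X > 0" using assms by (simp add: X_def)
  have lnX: "ln X = k*(p - 1/s)*L - k*ln 2"
    using assms unfolding X_def L_def
    by (simp add: ln_mult ln_div ln_powr field_simps)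
  have "X powr ((s*p/(s*p-1))/k) = exp (((s*p/(s*p-1))/k) * ln X)"
    using Xpos by (simp add: powr_def)
  also have "((s*p/(s*p-1))/k) * ln X = p*L - (s*p/(s*p-1))*ln 2"
    unfolding lnX using assms by (simp add: field_simps)
  also have "exp (p*L - (s*p/(s*p-1))*ln 2) \<le> exp (p*L - ln 2)"
  proof -
    have "1 \<le> s*p/(s*p-1)" using assms by (simp add: field_simps)
    then have "ln 2 \<le> (s*p/(s*p-1))*ln 2" using ln_gt_zero[of 2]
      by (metis mult_le_cancel_right1 less_le_not_le numeral_One one_less_numeral_iff semiring_norm(76))
    then show ?thesis by simp
  qed
  also have "exp (p*L - ln 2) = 1/2 * (w/m) powr p"
    using assms by (simp add: L_def powr_def exp_diff ln_div)
  finally show ?thesis unfolding X_def .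
qed

lemma keyX1:
  fixes w m p s k :: real
  assumes "w>0" "m>0" "s>0" "k\<ge>1" "s*p=1"
  shows "(((w/m) powr p) powr k * w powr (-k/s)) / (2 powr k * m powr (-k/s)) \<le> 1/2"
proof -
  have p: "p = 1/s" using assms by (simp add: field_simps)
  have "(((w/m) powr p) powr k * w powr (-k/s)) / (2 powr k * m powr (-k/s)) = 2 powr (-k)"
    using assms unfolding p by (simp add: powr_powr powr_divide powr_minus field_simps)
  also have "... \<le> 2 powr (-1)" using assms by (intro powr_mono) auto
  finally show ?thesis by (simp add: powr_minus)
qed

lemma holder_pt1:
  fixes w a l p s k :: real
  assumes "w>0" "a>0" "l>0" "s>0" "k>0" "s*p>1"
  shows "1 \<le> 2 * a powr (1/s) * l powr (1/k) * ((w/a) powr p + (w powr (-k/s)/l) powr ((s*p/(s*p-1))/k))"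
proof -
  define X where "X = (w/a) powr (1/s)"
  define Y where "Y = (w powr (-k/s)/l) powr (1/k)"
  have X0: "X \<ge> 0" "Y \<ge> 0" unfolding X_def Y_def by auto
  have Xr: "X powr (s*p) = (w/a) powr p" unfolding X_def using assms by (simp add: powr_powr)
  have Yr: "Y powr (s*p/(s*p-1)) = (w powr (-k/s)/l) powr ((s*p/(s*p-1))/k)"
    unfolding Y_def using assms by (simp add: powr_powr mult_ac)
  have X1: "X = w powr (1/s) / a powr (1/s)" unfolding X_def using assms by (simp add: powr_divide)
  have Y1: "Y = w powr (-1/s) / l powr (1/k)" unfolding Y_def using assms
    by (simp add: powr_divide powr_powr)
  have ww: "w powr (1/s) * w powr (-1/s) = 1" using assms by (simp add: powr_add[symmetric])
  have c1: "a powr (1/s) * l powr (1/k) * (X * Y) = 1"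
    unfolding X1 Y1 using assms ww by (simp add: field_simps)
  have "X * Y \<le> X powr (s*p) + Y powr (s*p/(s*p-1))"
    using X0 assms by (intro young_simple) auto
  then have "a powr (1/s) * l powr (1/k) * (X * Y) \<le> a powr (1/s) * l powr (1/k) * (X powr (s*p) + Y powr (s*p/(s*p-1)))"
    by (intro mult_left_mono) auto
  then have "1 \<le> a powr (1/s) * l powr (1/k) * ((w/a) powr p + (w powr (-k/s)/l) powr ((s*p/(s*p-1))/k))"
    by (simp only: c1 Xr Yr)
  also have "... \<le> 2 * a powr (1/s) * l powr (1/k) * ((w/a) powr p + (w powr (-k/s)/l) powr ((s*p/(s*p-1))/k))"
    by (intro mult_right_mono) auto
  finally show ?thesis .
qed

lemma holder_pt2:
  fixes w a l p s k :: real
  assumes "w>0" "a>0" "l>0" "s>0" "k\<ge>1" "s*p=1" "w powr (-k/s)/l \<le> 2"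
  shows "1 \<le> 2 * a powr (1/s) * l powr (1/k) * (w/a) powr p"
proof -
  have p: "p = 1/s" using assms by (simp add: field_simps)
  have e: "2 * a powr (1/s) * l powr (1/k) * (w/a) powr p = 2 * l powr (1/k) * w powr (1/s)"
    unfolding p using assms by (simp add: powr_divide)
  have "w powr (-k/s) \<le> 2 * l" using assms by (simp add: divide_le_eq)
  then have "(w powr (-k/s)) powr (1/k) \<le> (2*l) powr (1/k)"
    using assms by (intro powr_mono2) auto
  also have "... = 2 powr (1/k) * l powr (1/k)" using assms by (simp add: powr_mult)
  also have "... \<le> 2 * l powr (1/k)"
  proof -
    have "2 powr (1/k) \<le> 2 powr 1" using assms by (intro powr_mono) auto
    then show ?thesis by (intro mult_right_mono) auto
  qed
  finally have "w powr (-1/s) \<le> 2 * l powr (1/k)" using assms by (simp add: powr_powr)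
  then have "w powr (-1/s) * w powr (1/s) \<le> 2 * l powr (1/k) * w powr (1/s)"
    by (intro mult_right_mono) auto
  moreover have "w powr (-1/s) * w powr (1/s) = 1" using assms by (simp add: powr_add[symmetric])
  ultimately show ?thesis unfolding e by simp
qed

lemma lower_pt:
  fixes y a m p P :: real
  assumes "y \<ge> 0" "a > 0" "a \<le> m" "m < 2*a" "0 < p" "p \<le> P"
  shows "4 powr (-P) * (y/(a/2)) powr p \<le> (y/m) powr p"
proof (cases "y = 0")
  case True then show ?thesis by simp
next
  case False
  then have y: "y > 0" using assms by auto
  have b1: "(a/2)/m \<le> 1" "(a/2)/m \<ge> 1/4" "(a/2)/m > 0" using assms by (auto simp: field_simps)
  have "(y/m) powr p = ((a/2)/m) powr p * (y/(a/2)) powr p"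
    using assms y by (simp add: powr_mult[symmetric])
  moreover have "4 powr (-P) \<le> ((a/2)/m) powr p"
  proof -
    have "4 powr (-P) = (1/4) powr P" by (simp add: powr_minus powr_divide inverse_eq_divide)
    also have "... \<le> ((a/2)/m) powr P" using b1 assms by (intro powr_mono2) auto
    also have "... \<le> ((a/2)/m) powr p" using b1 assms by (intro powr_mono') auto
    finally show ?thesis .
  qed
  ultimately show ?thesis by (simp add: mult_right_mono)
qed

lemma fin_alg:
  fixes m1 a mu C k s d l :: real and n :: nat
  assumes "m1>0" "a>0" "mu>0" "C\<ge>1" "k>1" "s>1" "d>0" "l>0"
    "m1 \<le> 4 * a powr (1/s) * l powr (1/k)"
    "l < 2*C*(2 powr k * mu powr (-k/s)) / ((d/(2*(2^n*m1))) powr k)"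
  shows "mu \<le> (16 * (2*C) powr (1/k) * 2^n / d) powr s * a"
proof -
  define t where "t = d/(2*(2^n*m1))"
  have t: "t > 0" using assms by (simp add: t_def)
  have "2*C*(2 powr k * mu powr (-k/s)) / (t powr k) = (2*C) * (2 * mu powr (-1/s) / t) powr k"
    using assms t by (simp add: powr_mult powr_divide powr_powr)
  then have "l powr (1/k) \<le> ((2*C) * (2 * mu powr (-1/s) / t) powr k) powr (1/k)"
    using assms t_def by (intro powr_mono2) auto
  also have "... = (2*C) powr (1/k) * (2 * mu powr (-1/s) / t)"
    using assms t by (simp add: powr_mult powr_powr)
  finally have "m1 \<le> 4 * a powr (1/s) * ((2*C) powr (1/k) * (2 * mu powr (-1/s) / t))"
    using assms(9) by (smt (verit) mult_left_mono powr_ge_zero)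
  also have "... = m1 * ((16 * (2*C) powr (1/k) * 2^n / d) * a powr (1/s) * mu powr (-1/s))"
    unfolding t_def using assms by (simp add: field_simps)
  finally have "1 \<le> (16 * (2*C) powr (1/k) * 2^n / d) * a powr (1/s) * mu powr (-1/s)"
    using assms(1) by (metis mult_le_cancel_left_pos mult.right_neutral)
  then have "mu powr (1/s) \<le> (16 * (2*C) powr (1/k) * 2^n / d) * a powr (1/s)"
    using assms by (simp add: powr_minus divide_simps) (metis mult.commute)
  then have "(mu powr (1/s)) powr s \<le> ((16 * (2*C) powr (1/k) * 2^n / d) * a powr (1/s)) powr s"
    using assms by (intro powr_mono2) auto
  moreover have "(mu powr (1/s)) powr s = mu" using assms by (simp add: powr_powr)
  moreover have "((16 * (2*C) powr (1/k) * 2^n / d) * a powr (1/s)) powr s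
     = (16 * (2*C) powr (1/k) * 2^n / d) powr s * a" 
  proof -
    define K where "K = 16 * (2*C) powr (1/k) * 2^n / d"
    have "K \<ge> 0" using assms unfolding K_def by auto
    then have "(K * a powr (1/s)) powr s = K powr s * a" using assms by (simp add: powr_mult powr_powr)
    then show ?thesis unfolding K_def .
  qed
  ultimately show ?thesis by simp
qed

theorem lemma3p4:
  fixes p w :: "real^'n \<Rightarrow> real"
  assumes "p \<in> borel_measurable lebesgue"
    and "\<forall>x. 0 < p x"
    and "0 < p_minus p" and "p_plus p < \<infinity>"
    and "w \<in> W_class p"
  shows "\<exists>C::real. C \<ge> 1 \<and> (\<forall>c r. r > 0 \<longrightarrow>
     wnorm (\<lambda>x. ereal (p x)) w (indicator (cube c r))
       \<le> wnorm (\<lambda>x. ereal (p x)) w (indicator (cube c (2 * r))) \<and>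
     wnorm (\<lambda>x. ereal (p x)) w (indicator (cube c (2 * r)))
       \<le> ennreal C * wnorm (\<lambda>x. ereal (p x)) w (indicator (cube c r)))"
proof -
  note pm[measurable] = assms(1)
  have ppos: "\<And>x. 0 < p x" using assms(2) by blast
  from assms(5) have wm[measurable]: "w \<in> borel_measurable lebesgue"
    and wpos: "AE x in lebesgue. 0 < w x"
    unfolding W_class_def is_weight_def by auto
  from assms(5) obtain ps where ps: "0 < ps"
    "\<forall>Q\<in>cubes. wnorm (\<lambda>x. ereal (p x / ps)) (\<lambda>x. w x powr ps) (indicator Q) < \<infinity>"
    unfolding W_class_def by auto
  from assms(5) obtain \<kappa> s C0 where ks: "\<kappa> > 1" "s > 1" and sp1: "AE x in lebesgue. 1 \<le> s * p x"
    and MC: "\<forall>f \<in> borel_measurable lebesgue.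
           wnorm (\<lambda>x. conj_exp (\<lambda>y. s * p y) x / ereal \<kappa>) (\<lambda>x. w x powr (- \<kappa> / s)) f < \<infinity> \<longrightarrow>
           vnorm (\<lambda>x. conj_exp (\<lambda>y. s * p y) x / ereal \<kappa>)
                 (\<lambda>x. maximal f x * ennreal \<bar>w x powr (- \<kappa> / s)\<bar>)
           \<le> ennreal C0 * wnorm (\<lambda>x. conj_exp (\<lambda>y. s * p y) x / ereal \<kappa>) (\<lambda>x. w x powr (- \<kappa> / s)) f"
    unfolding W_class_def by blast
  define q where "q = (\<lambda>x. conj_exp (\<lambda>y. s * p y) x / ereal \<kappa>)"
  define v where "v = (\<lambda>x. w x powr (- \<kappa> / s))"
  have MC': "\<And>f. f \<in> borel_measurable lebesgue \<Longrightarrow> wnorm q v f < \<infinity> \<Longrightarrow>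
      vnorm q (\<lambda>x. maximal f x * ennreal \<bar>v x\<bar>) \<le> ennreal C0 * wnorm q v f"
    using MC unfolding q_def v_def by blast
  have qinf: "\<And>x. q x = \<infinity> \<longleftrightarrow> s * p x = 1"
    using ks unfolding q_def conj_exp_def by auto
  have qval: "\<And>x. s * p x \<noteq> 1 \<Longrightarrow> q x = ereal ((s * p x / (s * p x - 1)) / \<kappa>)"
    using ks unfolding q_def conj_exp_def by auto
  have qnn: "AE x in lebesgue. 0 \<le> q x"
    using sp1
  proof eventually_elim
    case (elim x)
    show ?case
    proof (cases "s * p x = 1")
      case True then show ?thesis using qinf[of x] by simp
    next
      case False
      then have "s * p x > 1" using elim by simp
      then show ?thesis using qval[OF False] ks by simp
    qed
  qed
  have "AE x in lebesgue. ereal (p x) \<le> p_plus p" unfolding p_plus_def by (rule esssup_AE)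
  moreover obtain P0 where "p_plus p \<le> ereal P0" using assms(4) by (cases "p_plus p") auto
  define P where "P = max P0 1"
  ultimately have pP: "AE x in lebesgue. p x \<le> P"
  proof (elim eventually_mono)
    fix x assume "ereal (p x) \<le> p_plus p"
    then have "ereal (p x) \<le> ereal P0" using \<open>p_plus p \<le> ereal P0\<close> by (rule order_trans)
    then show "p x \<le> P" unfolding P_def by simp
  qed
  have P1: "P \<ge> 1" unfolding P_def by simp
  define C' where "C' = max C0 1"
  have C'1: "C' \<ge> 1" unfolding C'_def by simp
  define \<delta> where "\<delta> = 4 powr (-P)"
  have \<delta>pos: "\<delta> > 0" unfolding \<delta>_def by simp
  define K1 where "K1 = 16 * (2*C') powr (1/\<kappa>) * 2^CARD('n) / \<delta>"
  define Cf where "Cf = K1 powr s"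
  have K1: "K1 \<ge> 1"
  proof -
    have "(2*C') powr (1/\<kappa>) \<ge> 1" using C'1 ks by (intro ge_one_powr_ge_zero) auto
    moreover have "(2::real)^CARD('n) \<ge> 1" by simp
    moreover have "1/\<delta> \<ge> 1" unfolding \<delta>_def using P1 ge_one_powr_ge_zero[of 4 P] by (simp add: powr_minus inverse_le_1_iff)
    ultimately have "16 * (2*C') powr (1/\<kappa>) * 2^CARD('n) * (1/\<delta>) \<ge> 1 * 1 * 1 * 1"
      by (intro mult_mono) auto
    then show ?thesis unfolding K1_def by simp
  qed
  have Cf1: "Cf \<ge> 1" unfolding Cf_def using K1 ks by (intro ge_one_powr_ge_zero) auto
  define A where "A = (\<lambda>E. wnorm (\<lambda>x. ereal (p x)) w (indicator E))"
  define Am where "Am = (\<lambda>E lam. \<integral>\<^sup>+x. ennreal ((\<bar>indicator E x * w x\<bar> / lam) powr p x) \<partial>lebesgue)"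
  have Aeq: "\<And>E. A E = vnorm (\<lambda>x. ereal (p x)) (\<lambda>x. ennreal \<bar>indicator E x * w x\<bar>)"
    unfolding A_def wnorm_def ..
  have Ameq: "\<And>E lam. lam > 0 \<Longrightarrow>
      modular (\<lambda>x. ereal (p x)) (\<lambda>x. ennreal \<bar>indicator E x * w x\<bar>) lam = Am E lam"
    unfolding Am_def by (rule modular_fin) auto
  have main: "A (cube c r) \<le> A (cube c (2*r)) \<and> A (cube c (2*r)) \<le> ennreal Cf * A (cube c r)"
    if r0: "r > 0" for c r
  proof -
    define E1 where "E1 = cube c r"
    define E2 where "E2 = cube c (2*r)"
    have E1m[measurable]: "E1 \<in> sets lebesgue" and E2m[measurable]: "E2 \<in> sets lebesgue"
      unfolding E1_def E2_def by (rule cube_sets)+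
    have E12: "E1 \<subseteq> E2"
    proof
      fix x assume "x \<in> E1"
      then have a: "\<And>i. \<bar>x $ i - c $ i\<bar> \<le> r" unfolding E1_def cube_def by blast
      have "\<bar>x $ i - c $ i\<bar> \<le> 2*r" for i using a[of i] r0 by linarith
      then show "x \<in> E2" unfolding E2_def cube_def by blast
    qed
    have E2c: "E2 \<in> cubes" unfolding E2_def cubes_def using r0 by (auto intro!: exI[of _ c] exI[of _ "2*r"])
    define m1 where "m1 = (2*r) ^ CARD('n)"
    define m2 where "m2 = (2*(2*r)) ^ CARD('n)"
    have m1pos: "m1 > 0" and m2pos: "m2 > 0" unfolding m1_def m2_def using r0 by auto
    have m21: "m2 = 2^CARD('n) * m1" unfolding m1_def m2_def by (rule power_mult_distrib)
    have E1meas: "emeasure lebesgue E1 = ennreal m1" unfolding E1_def m1_def by (rule cube_meas[OF r0])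
    have E2meas: "emeasure lebesgue E2 = ennreal m2" unfolding E2_def m2_def using r0 by (intro cube_meas) auto
    have part1: "A E1 \<le> A E2"
      unfolding Aeq
    proof (rule vnorm_mono, rule modular_mono)
      show "AE x in lebesgue. 0 \<le> ereal (p x)" using ppos by (simp add: less_imp_le)
      fix lam :: real
      show "AE x in lebesgue. ennreal \<bar>indicator E1 x * w x\<bar> / ennreal lam \<le> ennreal \<bar>indicator E2 x * w x\<bar> / ennreal lam"
        using E12 by (intro AE_I2 divide_right_mono_ennreal ennreal_leI) (auto simp: indicator_def)
    qed
    have part2: "A E2 \<le> ennreal Cf * A E1"
    proof (cases "A E2 = 0")
      case True then show ?thesis by simp
    next
      case A2ne: False
      have "wnorm (\<lambda>x. ereal (p x / ps)) (\<lambda>x. w x powr ps) (indicator E2) < \<infinity>"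
        using ps(2) E2c by blast
      then obtain t0' where "t0' \<ge> 0" "wnorm (\<lambda>x. ereal (p x / ps)) (\<lambda>x. w x powr ps) (indicator E2) = ennreal t0'"
        unfolding infinity_ennreal_def less_top_ennreal by blast
      then have "wnorm (\<lambda>x. ereal (p x / ps)) (\<lambda>x. w x powr ps) (indicator E2) < ennreal (t0' + 1)"
        by (simp add: ennreal_less_iff)
      then obtain lam where lam: "lam > 0"
        "modular (\<lambda>x. ereal (p x / ps)) (\<lambda>x. ennreal \<bar>indicator E2 x * w x powr ps\<bar>) lam \<le> 1"
        unfolding wnorm_def by (rule vnorm_less)
      have "modular (\<lambda>x. ereal (p x / ps)) (\<lambda>x. ennreal \<bar>indicator E2 x * w x powr ps\<bar>) lam
          = (\<integral>\<^sup>+x. ennreal ((\<bar>indicator E2 x * w x powr ps\<bar> / lam) powr (p x / ps)) \<partial>lebesgue)"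
        using lam by (intro modular_fin) auto
      also have "... = Am E2 (lam powr (1/ps))"
        unfolding Am_def
      proof (rule nn_integral_cong_AE)
        show "AE x in lebesgue. ennreal ((\<bar>indicator E2 x * w x powr ps\<bar> / lam) powr (p x / ps))
           = ennreal ((\<bar>indicator E2 x * w x\<bar> / lam powr (1/ps)) powr p x)"
          using wpos
        proof eventually_elim
          case (elim x)
          then show ?case using powr_ps[of "w x" lam ps "p x"] lam ps(1)
            by (cases "x \<in> E2") auto
        qed
      qed
      finally have "A E2 \<le> ennreal (lam powr (1/ps))"
        unfolding Aeq using lam by (intro vnorm_le) (auto simp: Ameq)
      then have A2fin: "A E2 < \<infinity>" using ennreal_less_top le_less_trans unfolding infinity_ennreal_def by blast
      define a where "a = enn2real (A E2)"
      have A2a: "A E2 = ennreal a" unfolding a_def using A2fin by simp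
      have apos: "a > 0" unfolding a_def enn2real_positive_iff using A2ne A2fin by (simp add: zero_less_iff_neq_zero)
      obtain mu where mu: "mu > 0" "modular (\<lambda>x. ereal (p x)) (\<lambda>x. ennreal \<bar>indicator E2 x * w x\<bar>) mu \<le> 1"
        "mu < 2*a"
      proof (rule vnorm_less)
        show "vnorm (\<lambda>x. ereal (p x)) (\<lambda>x. ennreal \<bar>indicator E2 x * w x\<bar>) < ennreal (2*a)"
          using apos A2a Aeq by (simp add: ennreal_less_iff)
      qed
      have Amu: "Am E2 mu \<le> 1" using mu Ameq by simp
      have amu: "a \<le> mu"
      proof -
        have "A E2 \<le> ennreal mu" unfolding Aeq using mu by (intro vnorm_le)
        then show ?thesis using A2a mu by (simp add: ennreal_le_iff)
      qed
      have Aa2: "1 < Am E2 (a/2)"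
      proof (rule ccontr)
        assume "\<not> 1 < Am E2 (a/2)"
        then have "A E2 \<le> ennreal (a/2)" unfolding Aeq using apos
          by (intro vnorm_le) (auto simp: Ameq not_less)
        then show False using A2a apos by (simp add: ennreal_le_iff)
      qed
      define Fi where "Fi = (\<lambda>x. (\<bar>indicator E2 x * w x\<bar> / mu) powr p x)"
      have Fim[measurable]: "Fi \<in> borel_measurable lebesgue" unfolding Fi_def by measurable
      have Fi0: "\<And>x. Fi x \<ge> 0" unfolding Fi_def by simp
      have Fiout: "\<And>x. x \<notin> E2 \<Longrightarrow> Fi x = 0" unfolding Fi_def by simp
      have FiE: "\<And>x. x \<in> E2 \<Longrightarrow> 0 < w x \<Longrightarrow> Fi x = (w x / mu) powr p x" unfolding Fi_def by simp
      have intFi: "(\<integral>\<^sup>+x. ennreal (Fi x) \<partial>lebesgue) \<le> 1" using Amu unfolding Am_def Fi_def .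
      have lowFi: "ennreal \<delta> \<le> (\<integral>\<^sup>+x. ennreal (Fi x) \<partial>lebesgue)"
      proof -
        have "ennreal \<delta> = ennreal \<delta> * 1" by simp
        also have "... \<le> ennreal \<delta> * Am E2 (a/2)" using Aa2 by (intro mult_left_mono) auto
        also have "... = (\<integral>\<^sup>+x. ennreal \<delta> * ennreal ((\<bar>indicator E2 x * w x\<bar> / (a/2)) powr p x) \<partial>lebesgue)"
          unfolding Am_def by (rule nn_integral_cmult[symmetric]) measurable
        also have "... \<le> (\<integral>\<^sup>+x. ennreal (Fi x) \<partial>lebesgue)"
        proof (rule nn_integral_mono_AE)
          show "AE x in lebesgue. ennreal \<delta> * ennreal ((\<bar>indicator E2 x * w x\<bar> / (a/2)) powr p x) \<le> ennreal (Fi x)"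
            using pP
          proof eventually_elim
            case (elim x)
            have "\<delta> * (\<bar>indicator E2 x * w x\<bar> / (a/2)) powr p x \<le> Fi x"
              unfolding Fi_def \<delta>_def using lower_pt[of "\<bar>indicator E2 x * w x\<bar>" a mu "p x" P] apos amu mu(3) ppos[of x] elim
              by auto
            moreover have "ennreal \<delta> * ennreal ((\<bar>indicator E2 x * w x\<bar> / (a/2)) powr p x)
               = ennreal (\<delta> * (\<bar>indicator E2 x * w x\<bar> / (a/2)) powr p x)"
              using \<delta>pos by (simp add: ennreal_mult)
            ultimately show ?case by (simp add: ennreal_leI)
          qed
        qed
        finally show ?thesis .
      qed
      define f where "f = (\<lambda>x. Fi x powr \<kappa>)"
      have fm[measurable]: "f \<in> borel_measurable lebesgue" unfolding f_def by measurable
      have f0: "\<And>x. f x \<ge> 0" unfolding f_def by simp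
      have fout: "\<And>x. x \<notin> E2 \<Longrightarrow> f x = 0" unfolding f_def using Fiout by simp
      define \<beta> where "\<beta> = 2 powr \<kappa> * mu powr (-\<kappa>/s)"
      have \<beta>pos: "\<beta> > 0" unfolding \<beta>_def using mu(1) by simp
      have modX: "modular q (\<lambda>x. ennreal \<bar>f x * v x\<bar>) \<beta> \<le> 1"
      proof -
        have "modular q (\<lambda>x. ennreal \<bar>f x * v x\<bar>) \<beta> =
          (\<integral>\<^sup>+x. (if q x = \<infinity> then 0 else ennreal ((\<bar>f x * v x\<bar> / \<beta>) powr real_of_ereal (q x))) \<partial>lebesgue)
          + Inf {c. AE x in lebesgue. q x = \<infinity> \<longrightarrow> ennreal (\<bar>f x * v x\<bar> / \<beta>) \<le> c}"
          using \<beta>pos by (intro modular_real) auto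
        also have "... \<le> ennreal (1/2) + ennreal (1/2)"
        proof (rule add_mono)
          have "(\<integral>\<^sup>+x. (if q x = \<infinity> then 0 else ennreal ((\<bar>f x * v x\<bar> / \<beta>) powr real_of_ereal (q x))) \<partial>lebesgue)
              \<le> (\<integral>\<^sup>+x. ennreal (1/2) * ennreal (Fi x) \<partial>lebesgue)"
          proof (rule nn_integral_mono_AE)
            show "AE x in lebesgue. (if q x = \<infinity> then 0 else ennreal ((\<bar>f x * v x\<bar> / \<beta>) powr real_of_ereal (q x)))
                \<le> ennreal (1/2) * ennreal (Fi x)"
              using wpos sp1
            proof eventually_elim
              case (elim x)
              show ?case
              proof (cases "s * p x = 1")
                case True then show ?thesis using qinf[of x] by simp
              next
                case spn: False
                then have sp: "s * p x > 1" using elim by simp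
                have qx: "q x \<noteq> \<infinity>" "real_of_ereal (q x) = (s * p x / (s * p x - 1)) / \<kappa>"
                  using qval[OF spn] by auto
                show ?thesis
                proof (cases "x \<in> E2")
                  case False
                  then show ?thesis using qx sp ks by (simp add: fout)
                next
                  case True
                  have e1: "\<bar>f x * v x\<bar> = ((w x / mu) powr p x) powr \<kappa> * w x powr (-\<kappa>/s)"
                    unfolding f_def v_def using FiE[OF True elim(1)] by simp
                  have Y: "(\<bar>f x * v x\<bar> / \<beta>) powr real_of_ereal (q x) \<le> 1/2 * Fi x"
                    unfolding e1 qx(2) \<beta>_def FiE[OF True elim(1)]
                    using keyX[of "w x" mu s \<kappa> "p x"] elim mu(1) ks sp by simp
                  have "ennreal ((\<bar>f x * v x\<bar> / \<beta>) powr real_of_ereal (q x)) \<le> ennreal (1/2 * Fi x)"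
                    using Y by (rule ennreal_leI)
                  also have "ennreal (1/2 * Fi x) = ennreal (1/2) * ennreal (Fi x)"
                    using Fi0[of x] by (intro ennreal_mult) auto
                  finally show ?thesis using qx(1) by simp
                qed
              qed
            qed
          qed
          also have "... = ennreal (1/2) * (\<integral>\<^sup>+x. ennreal (Fi x) \<partial>lebesgue)"
            by (rule nn_integral_cmult) measurable
          also have "... \<le> ennreal (1/2) * 1" using intFi by (intro mult_left_mono) auto
          finally show "(\<integral>\<^sup>+x. (if q x = \<infinity> then 0 else ennreal ((\<bar>f x * v x\<bar> / \<beta>) powr real_of_ereal (q x))) \<partial>lebesgue)
              \<le> ennreal (1/2)" by simp
          show "Inf {c. AE x in lebesgue. q x = \<infinity> \<longrightarrow> ennreal (\<bar>f x * v x\<bar> / \<beta>) \<le> c} \<le> ennreal (1/2)"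
          proof (rule Inf_lower, rule CollectI)
            show "AE x in lebesgue. q x = \<infinity> \<longrightarrow> ennreal (\<bar>f x * v x\<bar> / \<beta>) \<le> ennreal (1/2)"
              using wpos
            proof eventually_elim
              case (elim x)
              show ?case
              proof (intro impI)
                assume "q x = \<infinity>"
                then have sp: "s * p x = 1" using qinf by simp
                show "ennreal (\<bar>f x * v x\<bar> / \<beta>) \<le> ennreal (1/2)"
                proof (cases "x \<in> E2")
                  case False
                  then show ?thesis by (simp add: fout)
                next
                  case True
                  have e1: "\<bar>f x * v x\<bar> = ((w x / mu) powr p x) powr \<kappa> * w x powr (-\<kappa>/s)"
                    unfolding f_def v_def using FiE[OF True elim(1)] by simp
                  have "\<bar>f x * v x\<bar> / \<beta> \<le> 1/2"
                    unfolding e1 \<beta>_def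
                    using keyX1[of "w x" mu s \<kappa> "p x"] elim mu(1) ks sp by simp
                  then show ?thesis by (rule ennreal_leI)
                qed
              qed
            qed
          qed
        qed
        also have "ennreal (1/2) + ennreal (1/2) = 1"
          by (subst ennreal_plus[symmetric]) auto
        finally show ?thesis .
      qed
      have wf: "wnorm q v f \<le> ennreal \<beta>"
        unfolding wnorm_def using \<beta>pos modX by (intro vnorm_le)
      then have wffin: "wnorm q v f < \<infinity>"
        using ennreal_less_top le_less_trans unfolding infinity_ennreal_def by blast
      have MCf: "vnorm q (\<lambda>x. maximal f x * ennreal \<bar>v x\<bar>) \<le> ennreal (C' * \<beta>)"
      proof -
        have "vnorm q (\<lambda>x. maximal f x * ennreal \<bar>v x\<bar>) \<le> ennreal C0 * wnorm q v f"
          using MC'[OF fm wffin] .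
        also have "... \<le> ennreal C' * ennreal \<beta>"
          using wf unfolding C'_def by (intro mult_mono) (auto intro!: ennreal_leI)
        finally show ?thesis using C'1 \<beta>pos by (simp add: ennreal_mult)
      qed
      define t0 where "t0 = \<delta> / (2*m2)"
      have t0pos: "t0 > 0" unfolding t0_def using \<delta>pos m2pos by simp
      define T where "T = t0 powr \<kappa>"
      have Tpos: "T > 0" unfolding T_def using t0pos by simp
      define If where "If = (\<integral>\<^sup>+x. ennreal (f x) \<partial>lebesgue)"
      have Ifl: "ennreal (T * m2) \<le> If"
      proof -
        have "(\<integral>\<^sup>+x. ennreal (Fi x) \<partial>lebesgue) \<le>
            (\<integral>\<^sup>+x. ennreal t0 * indicator E2 x + ennreal (t0 powr (1-\<kappa>)) * ennreal (f x) \<partial>lebesgue)"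
        proof (rule nn_integral_mono)
          fix x
          show "ennreal (Fi x) \<le> ennreal t0 * indicator E2 x + ennreal (t0 powr (1-\<kappa>)) * ennreal (f x)"
          proof (cases "x \<in> E2")
            case False then show ?thesis by (simp add: Fiout)
          next
            case True
            have "Fi x \<le> t0 + t0 powr (1-\<kappa>) * f x"
              unfolding f_def using pointwise_jensen[of "Fi x" t0 \<kappa>] Fi0 t0pos ks by simp
            then have "ennreal (Fi x) \<le> ennreal (t0 + t0 powr (1-\<kappa>) * f x)" by (rule ennreal_leI)
            also have "... = ennreal t0 + ennreal (t0 powr (1-\<kappa>)) * ennreal (f x)"
              using t0pos f0[of x] by (subst ennreal_plus) (auto simp: ennreal_mult)
            finally show ?thesis using True by simp
          qed
        qed
        also have "... = (\<integral>\<^sup>+x. ennreal t0 * indicator E2 x \<partial>lebesgue) + (\<integral>\<^sup>+x. ennreal (t0 powr (1-\<kappa>)) * ennreal (f x) \<partial>lebesgue)"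
          by (rule nn_integral_add) measurable
        also have "... = ennreal t0 * emeasure lebesgue E2 + ennreal (t0 powr (1-\<kappa>)) * If"
          unfolding If_def by (subst nn_integral_cmult, measurable, subst nn_integral_cmult, measurable)
        also have "... = ennreal (t0 * m2) + ennreal (t0 powr (1-\<kappa>)) * If"
          using E2meas t0pos m2pos by (simp add: ennreal_mult)
        finally have le: "ennreal \<delta> \<le> ennreal (t0 * m2) + ennreal (t0 powr (1-\<kappa>)) * If"
          using lowFi by (rule order_trans[rotated])
        show ?thesis
        proof (cases "If = top")
          case True then show ?thesis by simp
        next
          case False
          then obtain Ir where Ir: "Ir \<ge> 0" "If = ennreal Ir"
            using less_top_ennreal top.not_eq_extremum by blast
          have "ennreal (t0 * m2) + ennreal (t0 powr (1-\<kappa>)) * If = ennreal (t0*m2 + t0 powr (1-\<kappa>) * Ir)"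
            unfolding Ir(2) using t0pos m2pos Ir(1) by (subst ennreal_plus) (auto simp: ennreal_mult)
          with le have "ennreal \<delta> \<le> ennreal (t0*m2 + t0 powr (1-\<kappa>) * Ir)" by simp
          then have "\<delta> \<le> t0*m2 + t0 powr (1-\<kappa>) * Ir"
            using t0pos m2pos Ir(1) by (subst (asm) ennreal_le_iff) auto
          moreover have "\<delta> = 2*t0*m2" unfolding t0_def using m2pos by simp
          ultimately have "t0 powr \<kappa> * m2 \<le> Ir" using jensen_fin[of t0 m2 \<kappa> Ir] t0pos m2pos ks Ir by simp
          then show ?thesis unfolding T_def Ir(2) by (rule ennreal_leI)
        qed
      qed
      have Mlow: "ennreal T \<le> maximal f x" if xE: "x \<in> E2" for x
      proof -
        have "(\<integral>\<^sup>+ y \<in> E2. ennreal \<bar>f y\<bar> \<partial>lebesgue) / emeasure lebesgue E2 \<le> maximal f x"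
          unfolding maximal_def using E2c xE by (intro SUP_upper) auto
        moreover have "(\<integral>\<^sup>+ y \<in> E2. ennreal \<bar>f y\<bar> \<partial>lebesgue) = If"
          unfolding If_def by (intro nn_integral_cong) (auto simp: fout f0 indicator_def)
        moreover have "ennreal T \<le> If / ennreal m2"
        proof -
          have "ennreal T = ennreal (T*m2) / ennreal m2" using m2pos Tpos by (simp add: divide_ennreal)
          also have "... \<le> If / ennreal m2" using Ifl by (rule divide_right_mono_ennreal)
          finally show ?thesis .
        qed
        ultimately show ?thesis using E2meas by simp
      qed
      define g1 where "g1 = (\<lambda>x. ennreal \<bar>indicator E1 x * v x\<bar>)"
      have lowB: "ennreal T * vnorm q g1 \<le> vnorm q (\<lambda>x. maximal f x * ennreal \<bar>v x\<bar>)"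
      proof (rule vnorm_ge)
        fix lam :: real assume lam: "lam > 0" "modular q (\<lambda>x. maximal f x * ennreal \<bar>v x\<bar>) lam \<le> 1"
        have "modular q g1 (lam / T) \<le> modular q (\<lambda>x. maximal f x * ennreal \<bar>v x\<bar>) lam"
        proof (rule modular_mono[OF qnn], rule AE_I2)
          fix x
          show "g1 x / ennreal (lam/T) \<le> maximal f x * ennreal \<bar>v x\<bar> / ennreal lam"
          proof (cases "x \<in> E1")
            case False then show ?thesis by (simp add: g1_def)
          next
            case True
            then have xE2: "x \<in> E2" using E12 by auto
            have "g1 x / ennreal (lam/T) = ennreal (\<bar>v x\<bar> / (lam/T))"
              using True Tpos lam(1) by (simp add: g1_def divide_ennreal)
            also have "... = ennreal (T * \<bar>v x\<bar>) / ennreal lam"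
              using Tpos lam(1) by (simp add: divide_ennreal field_simps)
            also have "... = ennreal T * ennreal \<bar>v x\<bar> / ennreal lam"
              using Tpos by (simp add: ennreal_mult)
            also have "... \<le> maximal f x * ennreal \<bar>v x\<bar> / ennreal lam"
              using Mlow[OF xE2] by (intro divide_right_mono_ennreal mult_right_mono) auto
            finally show ?thesis .
          qed
        qed
        then have "vnorm q g1 \<le> ennreal (lam / T)" using lam Tpos by (intro vnorm_le) auto
        then have "ennreal T * vnorm q g1 \<le> ennreal T * ennreal (lam/T)" by (rule mult_left_mono) simp
        also have "... = ennreal lam" using Tpos lam(1) by (subst ennreal_mult[symmetric]) auto
        finally show "ennreal T * vnorm q g1 \<le> ennreal lam" .
      qed
      have B1: "ennreal T * vnorm q g1 \<le> ennreal (C' * \<beta>)" using lowB MCf by (rule order_trans)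
      have B1fin: "vnorm q g1 \<noteq> top"
      proof
        assume "vnorm q g1 = top"
        then have "ennreal T * vnorm q g1 = top" using Tpos by (simp add: ennreal_mult_eq_top_iff)
        then show False using B1 by (simp add: top_unique)
      qed
      obtain b1 where b1: "b1 \<ge> 0" "vnorm q g1 = ennreal b1"
        using B1fin less_top_ennreal top.not_eq_extremum by blast
      have "ennreal (T * b1) \<le> ennreal (C' * \<beta>)" using B1 b1 Tpos by (simp add: ennreal_mult)
      then have "T * b1 \<le> C' * \<beta>" using C'1 \<beta>pos by (subst (asm) ennreal_le_iff) auto
      moreover have "C' * \<beta> > 0" using C'1 \<beta>pos by simp
      ultimately have "T * b1 < 2*C'*\<beta>" by linarith
      then have "b1 < 2*C'*\<beta>/T" using Tpos by (simp add: field_simps)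
      then have "vnorm q g1 < ennreal (2*C'*\<beta>/T)" using b1 by (simp add: ennreal_less_iff)
      then obtain lam where lam: "lam > 0" "modular q g1 lam \<le> 1" "lam < 2*C'*\<beta>/T" by (rule vnorm_less)
      define G where "G = (\<lambda>x. \<bar>indicator E1 x * v x\<bar>)"
      have g1G: "g1 = (\<lambda>x. ennreal (G x))" unfolding g1_def G_def ..
      define Xi where "Xi = (\<lambda>x. if q x = \<infinity> then 0 else ennreal ((G x / lam) powr real_of_ereal (q x)))"
      define Xi' where "Xi' = (\<lambda>x. if s * p x = 1 then 0 else ennreal ((G x / lam) powr ((s * p x / (s * p x - 1)) / \<kappa>)))"
      have XiXi': "Xi = Xi'" unfolding Xi_def Xi'_def using qinf qval by (auto simp: fun_eq_iff)
      have Xi'm[measurable]: "Xi' \<in> borel_measurable lebesgue" unfolding Xi'_def G_def v_def by measurable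
      define Inf1 where "Inf1 = Inf {c. AE x in lebesgue. q x = \<infinity> \<longrightarrow> ennreal (G x / lam) \<le> c}"
      have modg1: "modular q g1 lam = (\<integral>\<^sup>+x. Xi x \<partial>lebesgue) + Inf1"
        unfolding g1G Xi_def Inf1_def using lam(1) by (intro modular_real) (auto simp: G_def)
      have IXi: "(\<integral>\<^sup>+x. Xi' x \<partial>lebesgue) \<le> 1"
      proof -
        have "(\<integral>\<^sup>+x. Xi x \<partial>lebesgue) \<le> (\<integral>\<^sup>+x. Xi x \<partial>lebesgue) + Inf1" by simp
        also have "... \<le> 1" using lam(2) modg1 by simp
        finally show ?thesis using XiXi' by simp
      qed
      have Inf1le: "Inf1 \<le> 1"
      proof -
        have "Inf1 \<le> (\<integral>\<^sup>+x. Xi x \<partial>lebesgue) + Inf1" by simp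
        also have "... \<le> 1" using lam(2) modg1 by simp
        finally show ?thesis .
      qed
      have AEsp: "AE x in lebesgue. s * p x = 1 \<longrightarrow> G x / lam \<le> 2"
      proof -
        have "Inf1 < 2" using Inf1le by (rule le_less_trans) simp
        then obtain c where c: "AE x in lebesgue. q x = \<infinity> \<longrightarrow> ennreal (G x / lam) \<le> c" "c < 2"
          unfolding Inf1_def Inf_less_iff by blast
        from c(1) show ?thesis
        proof (rule eventually_mono, intro impI)
          fix x assume a1: "q x = \<infinity> \<longrightarrow> ennreal (G x / lam) \<le> c" and a2: "s * p x = 1"
          then have "ennreal (G x / lam) \<le> c" using qinf by simp
          then have "ennreal (G x / lam) < 2" using c(2) by (rule le_less_trans)
          then have "ennreal (G x / lam) < ennreal 2" by simp
          then show "G x / lam \<le> 2" using lam(1) by (simp add: ennreal_less_iff G_def)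
        qed
      qed
      have hold: "m1 \<le> 4 * \<alpha> powr (1/s) * lam powr (1/\<kappa>)" if al: "\<alpha> > 0" "Am E1 \<alpha> \<le> 1" for \<alpha>
      proof -
        define c0 where "c0 = 2 * \<alpha> powr (1/s) * lam powr (1/\<kappa>)"
        have c0pos: "c0 > 0" unfolding c0_def using al lam by simp
        define Ai where "Ai = (\<lambda>x. ennreal ((\<bar>indicator E1 x * w x\<bar> / \<alpha>) powr p x))"
        have Aim[measurable]: "Ai \<in> borel_measurable lebesgue" unfolding Ai_def by measurable
        have "ennreal m1 = (\<integral>\<^sup>+x. indicator E1 x \<partial>lebesgue)" using E1meas by simp
        also have "... \<le> (\<integral>\<^sup>+x. ennreal c0 * (Ai x + Xi' x) \<partial>lebesgue)"
        proof (rule nn_integral_mono_AE)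
          show "AE x in lebesgue. indicator E1 x \<le> ennreal c0 * (Ai x + Xi' x)"
            using wpos sp1 AEsp
          proof eventually_elim
            case (elim x)
            show ?case
            proof (cases "x \<in> E1")
              case False then show ?thesis by simp
            next
              case True
              have Gx: "G x = w x powr (-\<kappa>/s)" unfolding G_def v_def using True by simp
              have Aix: "Ai x = ennreal ((w x / \<alpha>) powr p x)" unfolding Ai_def using True elim(1) by simp
              show ?thesis
              proof (cases "s * p x = 1")
                case True
                have "1 \<le> c0 * (w x / \<alpha>) powr p x"
                  unfolding c0_def using holder_pt2[of "w x" \<alpha> lam s \<kappa> "p x"] elim al lam ks True Gx by simp
                then have "ennreal 1 \<le> ennreal (c0 * (w x / \<alpha>) powr p x)" by (rule ennreal_leI)
                also have "... = ennreal c0 * (Ai x + Xi' x)"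
                  using True c0pos unfolding Aix Xi'_def by (simp add: ennreal_mult)
                finally show ?thesis using \<open>x \<in> E1\<close> by simp
              next
                case False
                then have sp: "s * p x > 1" using elim by simp
                have "1 \<le> c0 * ((w x / \<alpha>) powr p x + (G x / lam) powr ((s * p x / (s * p x - 1)) / \<kappa>))"
                  unfolding c0_def Gx using holder_pt1[of "w x" \<alpha> lam s \<kappa> "p x"] elim al lam ks sp by simp
                then have "ennreal 1 \<le> ennreal (c0 * ((w x / \<alpha>) powr p x + (G x / lam) powr ((s * p x / (s * p x - 1)) / \<kappa>)))"
                  by (rule ennreal_leI)
                also have "... = ennreal c0 * (Ai x + Xi' x)"
                  using False c0pos unfolding Aix Xi'_def by (simp add: ennreal_mult ennreal_plus)
                finally show ?thesis using \<open>x \<in> E1\<close> by simp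
              qed
            qed
          qed
        qed
        also have "... = ennreal c0 * (\<integral>\<^sup>+x. Ai x + Xi' x \<partial>lebesgue)"
          by (rule nn_integral_cmult) measurable
        also have "(\<integral>\<^sup>+x. Ai x + Xi' x \<partial>lebesgue) = (\<integral>\<^sup>+x. Ai x \<partial>lebesgue) + (\<integral>\<^sup>+x. Xi' x \<partial>lebesgue)"
          by (rule nn_integral_add) measurable
        also have "ennreal c0 * ((\<integral>\<^sup>+x. Ai x \<partial>lebesgue) + (\<integral>\<^sup>+x. Xi' x \<partial>lebesgue)) \<le> ennreal c0 * (1 + 1)"
          using al(2) IXi unfolding Am_def Ai_def by (intro mult_left_mono add_mono) auto
        also have "ennreal c0 * (1 + 1) = ennreal (2 * c0)" using c0pos by (simp add: ennreal_mult mult.commute)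
        finally have "m1 \<le> 2 * c0" using c0pos by (subst (asm) ennreal_le_iff) auto
        then show ?thesis unfolding c0_def by simp
      qed
      have lam3: "lam < 2*C'*(2 powr \<kappa> * mu powr (-\<kappa>/s)) / ((\<delta>/(2*(2^CARD('n)*m1))) powr \<kappa>)"
        using lam(3) unfolding \<beta>_def T_def t0_def m21 .
      have fin: "a \<le> Cf * \<alpha>" if al: "\<alpha> > 0" "Am E1 \<alpha> \<le> 1" for \<alpha>
      proof -
        have "mu \<le> K1 powr s * \<alpha>" unfolding K1_def
          by (rule fin_alg[OF m1pos al(1) mu(1) C'1 ks \<delta>pos lam(1) hold[OF al] lam3])
        then show ?thesis using amu unfolding Cf_def by simp
      qed
      have "ennreal (a / Cf) \<le> A E1"
        unfolding Aeq
      proof (rule vnorm_ge)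
        fix \<alpha> :: real assume al: "\<alpha> > 0" "modular (\<lambda>x. ereal (p x)) (\<lambda>x. ennreal \<bar>indicator E1 x * w x\<bar>) \<alpha> \<le> 1"
        then have "Am E1 \<alpha> \<le> 1" using Ameq by simp
        then have "a \<le> Cf * \<alpha>" using fin al(1) by blast
        then show "ennreal (a/Cf) \<le> ennreal \<alpha>" using Cf1 by (intro ennreal_leI) (simp add: field_simps)
      qed
      then have "ennreal Cf * ennreal (a/Cf) \<le> ennreal Cf * A E1" by (rule mult_left_mono) simp
      moreover have "ennreal Cf * ennreal (a/Cf) = A E2"
        using A2a Cf1 apos by (subst ennreal_mult[symmetric]) auto
      ultimately show ?thesis by simp
    qed
    show ?thesis using part1 part2 unfolding E1_def E2_def by simp
  qed
  show ?thesis using Cf1 main unfolding A_def by blast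
qed

end
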